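(* A superconvex set $X$ is iterative if and only if for all sequences $(x_i)_{i\ge0}$ and $(y_i)_{i\ge0}$ of elements of $X$ satisfying $x_i=\tfrac12\cdot y_i+\tfrac12\cdot x_{i+1}$ for all $i$, it holds that $x_0=\sum_{i\in\mathbb{N}}2^{-(i+1)}\cdot y_i$.
   Context: A superconvex weight function is a pair $(I,\lambda)$ with $I$ any set and $\lambda\colon I\to[0,1]$ with $\sum_{i\in I}\lambda_i=1$. A superconvex set is a set $X$ with an operation assigning to each superconvex weight function $(I,\lambda)$ and $x\colon I\to X$ an element $\sum_{i\in I}\lambda_i\cdot x_i\in X$, such that $\sum_{i\in 1}1\cdot x=x$ and $\sum_{i\in I}\lambda_i\cdot(\sum_{j\in J}\mu_{ij}\cdot x_j)=\sum_{j\in J}(\sum_{i\in I}\lambda_i\mu_{ij})\cdot x_j$ for all weight functions $(I,\lambda)$, $(J,\mu_i)$. Binary combinations are written $\lambda\cdot x+\mu\cdot y$. A superconvex set is iterative if for every sequence of proper binary combinations $x_i=\lambda_i\cdot y_i+\mu_i\cdot x_{i+1}$ (with $\lambda_i,\mu_i\in(0,1)$, $\lambda_i+\mu_i=1$) such that $\lim_{n\to\infty}\prod_{i<n}\mu_i=0$, one has $x_0=\sum_{i\in\mathbb{N}}\big(\lambda_i\prod_{j<i}\mu_j\big)\cdot y_i$. *)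

theory Defs
  imports "HOL-Probability.Probability_Mass_Function"
begin

text \<open>A superconvex structure on a type 'x is an operation assigning to every
countably supported probability distribution (i.e. the distribution induced by a
superconvex weight function (I,lambda) together with x : I -> X) an element of X,
satisfying the projection and composition laws of the paper.  The combination
sum_i lambda_i x_i is the value of the operation on the pushforward distribution.\<close>

definition superconvex :: "('x pmf \<Rightarrow> 'x) \<Rightarrow> bool" where
  "superconvex op \<longleftrightarrow>
     (\<forall>x. op (return_pmf x) = x) \<and>
     (\<forall>M :: 'x pmf pmf. op (map_pmf op M) = op (join_pmf M))"

definition bincomb :: "('x pmf \<Rightarrow> 'x) \<Rightarrow> real \<Rightarrow> 'x \<Rightarrow> 'x \<Rightarrow> 'x" where
  "bincomb op a x y = op (map_pmf (\<lambda>b. if b then x else y) (bernoulli_pmf a))"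

definition natcomb :: "('x pmf \<Rightarrow> 'x) \<Rightarrow> (nat \<Rightarrow> real) \<Rightarrow> (nat \<Rightarrow> 'x) \<Rightarrow> 'x" where
  "natcomb op w y = op (map_pmf y (embed_pmf w))"

definition iterative :: "('x pmf \<Rightarrow> 'x) \<Rightarrow> bool" where
  "iterative op \<longleftrightarrow>
     (\<forall>(lam :: nat \<Rightarrow> real) (mu :: nat \<Rightarrow> real) (x :: nat \<Rightarrow> 'x) (y :: nat \<Rightarrow> 'x).
        (\<forall>i. 0 < lam i \<and> lam i < 1 \<and> 0 < mu i \<and> mu i < 1 \<and> lam i + mu i = 1) \<and>
        (\<forall>i. x i = bincomb op (lam i) (y i) (x (Suc i))) \<and>
        (\<lambda>n. \<Prod>i<n. mu i) \<longlonglongrightarrow> 0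
        \<longrightarrow> x 0 = natcomb op (\<lambda>i. lam i * (\<Prod>j<i. mu j)) y)"

end

theory Submission
  imports Defs
begin

lemma embed_pmf_nat:
  fixes f :: "nat \<Rightarrow> real"
  assumes "\<And>n. 0 \<le> f n" "f sums 1"
  shows "pmf (embed_pmf f) n = f n"
proof (rule pmf_embed_pmf)
  show "0 \<le> f x" for x using assms(1) .
  have "(\<integral>\<^sup>+x. ennreal (f x) \<partial>count_space UNIV) = (\<Sum>i. ennreal (f i))"
    by (rule nn_integral_count_space_nat)
  also have "\<dots> = ennreal (\<Sum>i. f i)"
    using assms by (intro suminf_ennreal2) (auto simp: sums_iff)
  also have "(\<Sum>i. f i) = 1" using assms(2) by (simp add: sums_iff)
  finally show "(\<integral>\<^sup>+x. ennreal (f x) \<partial>count_space UNIV) = 1" by simp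
qed

locale SC =
  fixes op :: "'x pmf \<Rightarrow> 'x"
  assumes sc: "superconvex op"
begin

lemma op_return: "op (return_pmf a) = a"
  using sc unfolding superconvex_def by blast

lemma op_bind: "op (bind_pmf M f) = op (map_pmf (\<lambda>a. op (f a)) M)"
proof -
  have "op (bind_pmf M f) = op (join_pmf (map_pmf f M))" by (simp add: bind_eq_join_pmf)
  also have "\<dots> = op (map_pmf op (map_pmf f M))" using sc unfolding superconvex_def by metis
  also have "\<dots> = op (map_pmf (\<lambda>a. op (f a)) M)" by (simp add: map_pmf_comp)
  finally show ?thesis .
qed

end

locale IT = SC op for op :: "'x pmf \<Rightarrow> 'x" +
  fixes lam mu :: "nat \<Rightarrow> real" and x y :: "nat \<Rightarrow> 'x"
  assumes pos: "\<And>i. 0 < lam i \<and> lam i < 1 \<and> 0 < mu i \<and> mu i < 1 \<and> lam i + mu i = 1"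
  and rec: "\<And>i. x i = bincomb op (lam i) (y i) (x (Suc i))"
  and lim: "(\<lambda>n. \<Prod>i<n. mu i) \<longlonglongrightarrow> 0"
begin

definition P where "P n = (\<Prod>i<n. mu i)"

lemma P_0[simp]: "P 0 = 1" by (simp add: P_def)
lemma P_Suc: "P (Suc n) = P n * mu n" by (simp add: P_def)
lemma P_pos: "0 < P n"
  unfolding P_def using pos by (intro prod_pos) auto
lemma P_Suc_le: "P (Suc n) \<le> P n"
  using P_pos[of n] pos[of n] by (simp add: P_Suc mult_left_le)
lemma P_mono: "m \<le> n \<Longrightarrow> P n \<le> P m"
  by (induction n rule: dec_induct) (auto intro: order_trans[OF P_Suc_le])
lemma P_le1: "P n \<le> 1" using P_mono[of 0 n] by simp
lemma P_lim: "P \<longlonglongrightarrow> 0" using lim by (simp add: P_def[abs_def])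
lemma P_ex: "0 < p \<Longrightarrow> \<exists>m. P m \<le> p"
proof -
  assume "0 < p"
  then have "eventually (\<lambda>n. P n < p) sequentially"
    using order_tendstoD(2)[OF P_lim] by blast
  then show ?thesis by (auto simp: eventually_sequentially intro: less_imp_le)
qed
lemma lamP: "lam n * P n = P n - P (Suc n)"
proof -
  have "lam n = 1 - mu n" using pos[of n] by simp
  then show ?thesis by (simp add: P_Suc left_diff_distrib)
qed

definition D where "D n t = min (P n) t - min (P (Suc n)) t"

lemma D_mono: "c \<le> d \<Longrightarrow> D n c \<le> D n d"
  using P_Suc_le[of n] unfolding D_def by (auto simp: min_def)

lemma D_sums: "0 \<le> t \<Longrightarrow> (\<lambda>n. D n t) sums (min 1 t)"
proof -
  assume t: "0 \<le> t"
  have "(\<lambda>n. min (P n) t) \<longlonglongrightarrow> min 0 t"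
    by (intro tendsto_min P_lim tendsto_const)
  from telescope_sums'[OF this] show ?thesis using t by (simp add: D_def[abs_def])
qed

lemma D_tail: "P n \<le> c \<Longrightarrow> c \<le> d \<Longrightarrow> D n d = D n c"
  using P_Suc_le[of n] unfolding D_def by (auto simp: min_def)

lemma D_head: "t \<le> P (Suc n) \<Longrightarrow> D n t = 0"
  using P_Suc_le[of n] unfolding D_def by (auto simp: min_def)

lemma D_0: "D n 0 = 0"
  using P_pos[of n] P_pos[of "Suc n"] unfolding D_def by (auto simp: min_def)

lemma D_1: "D n 1 = P n - P (Suc n)"
  using P_le1[of n] P_le1[of "Suc n"] unfolding D_def by (auto simp: min_def)

definition h where "h c d n = (D n d - D n c) / (d - c)"
definition Dist where "Dist c d = embed_pmf (h c d)"

lemma pmf_Dist: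
  assumes "0 \<le> c" "c < d" "d \<le> 1"
  shows "pmf (Dist c d) n = h c d n"
  unfolding Dist_def
proof (rule embed_pmf_nat)
  show "0 \<le> h c d n" for n using assms D_mono[of c d n] by (simp add: h_def)
  have "(\<lambda>n. D n d - D n c) sums (min 1 d - min 1 c)"
    using assms by (intro sums_diff D_sums) auto
  then have "(\<lambda>n. (D n d - D n c) / (d - c)) sums ((min 1 d - min 1 c) / (d - c))"
    by (rule sums_divide)
  then show "h c d sums 1" using assms by (simp add: h_def[abs_def])
qed


lemma pmf_T: "0 < p \<Longrightarrow> p \<le> 1 \<Longrightarrow> pmf (Dist 0 p) n = D n p / p"
  by (simp add: pmf_Dist h_def D_0)

definition g where "g m i = (if i < m then y i else x m)"

lemma Dist_Pm_head: "n < m \<Longrightarrow> pmf (Dist 0 (P m)) n = 0"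
  using P_pos[of m] P_le1[of m] P_mono[of "Suc n" m]
  by (simp add: pmf_T D_head)

lemma xm: "op (map_pmf (g (Suc m)) (Dist 0 (P m))) = x m"
proof -
  let ?T = "Dist 0 (P m)"
  have Pm: "0 < P m" "P m \<le> 1" using P_pos P_le1 by auto
  have lm: "0 \<le> lam m" "lam m \<le> 1" using pos[of m] by auto
  have "map_pmf (g (Suc m)) ?T = map_pmf (\<lambda>b. if b then y m else x (Suc m)) (map_pmf (\<lambda>i. i = m) ?T)"
    unfolding map_pmf_comp
  proof (rule map_pmf_cong[OF refl])
    fix i assume "i \<in> set_pmf ?T"
    then have "\<not> i < m" using Dist_Pm_head by (auto simp: set_pmf_iff)
    then show "g (Suc m) i = (if i = m then y m else x (Suc m))" by (auto simp: g_def)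
  qed
  also have "map_pmf (\<lambda>i. i = m) ?T = bernoulli_pmf (lam m)"
  proof (rule pmf_eqI)
    fix b :: bool
    have pm: "pmf ?T m = lam m"
      using Pm by (simp add: pmf_T D_def min_def lamP[symmetric] P_Suc_le)
    have "measure ?T {m} = lam m" using pm by (simp add: measure_pmf_single)
    moreover have "measure ?T (-{m}) = 1 - lam m"
      using measure_pmf.prob_compl[of "{m}" ?T] pm by (simp add: measure_pmf_single Compl_eq_Diff_UNIV)
    moreover have "(\<lambda>i. i = m) -` {True} = {m}" "(\<lambda>i. i = m) -` {False} = -{m}" by auto
    ultimately show "pmf (map_pmf (\<lambda>i. i = m) ?T) b = pmf (bernoulli_pmf (lam m)) b"
      using lm by (cases b) (simp_all add: pmf_map)
  qed
  finally show ?thesis by (simp add: rec[of m] bincomb_def)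
qed

lemma tail_step:
  assumes p: "0 < p" "p \<le> 1" and m: "P m \<le> p"
  shows "op (map_pmf (g m) (Dist 0 p)) = op (map_pmf (g (Suc m)) (Dist 0 p))"
proof -
  let ?T = "Dist 0 p"
  define K where "K i = (if i < m then return_pmf i else Dist 0 (P m))" for i
  have Pm: "0 < P m" "P m \<le> 1" using P_pos P_le1 by auto
  have sumhead: "(\<Sum>i<m. pmf ?T i) = 1 - P m / p"
  proof -
    have "(\<Sum>i<m. pmf ?T i) = (\<Sum>i<m. min (P i) p - min (P (Suc i)) p) / p"
      using p by (simp add: pmf_T D_def sum_divide_distrib)
    also have "\<dots> = (min (P 0) p - min (P m) p) / p" by (subst sum_lessThan_telescope') simp
    also have "\<dots> = 1 - P m / p" using p m by (simp add: min_def field_simps)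
    finally show ?thesis .
  qed
  have mtail: "measure ?T {i. \<not> i < m} = P m / p"
  proof -
    have "{i. \<not> i < m} = UNIV - {..<m}" by auto
    then have "measure ?T {i. \<not> i < m} = 1 - measure ?T {..<m}"
      using measure_pmf.prob_compl[of "{..<m}" ?T] by simp
    also have "measure ?T {..<m} = (\<Sum>i<m. pmf ?T i)" by (simp add: measure_measure_pmf_finite)
    finally show ?thesis using sumhead by simp
  qed
  have TK: "bind_pmf ?T K = ?T"
  proof (rule pmf_eqI)
    fix n
    show "pmf (bind_pmf ?T K) n = pmf ?T n"
    proof (cases "n < m")
      case True
      have "pmf (bind_pmf ?T K) n = (\<integral>i. indicator {n} i \<partial>measure_pmf ?T)"
        unfolding pmf_bind
        by (intro Bochner_Integration.integral_cong refl) (auto simp: K_def Dist_Pm_head True indicator_def)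
      also have "\<dots> = pmf ?T n" by (simp add: measure_pmf_single)
      finally show ?thesis .
    next
      case False
      let ?w = "pmf (Dist 0 (P m)) n"
      have "pmf (bind_pmf ?T K) n = (\<integral>i. ?w * indicator {i. \<not> i < m} i \<partial>measure_pmf ?T)"
        unfolding pmf_bind
        by (intro Bochner_Integration.integral_cong refl) (auto simp: K_def False indicator_def)
      also have "\<dots> = ?w * (P m / p)" using mtail by simp
      also have "\<dots> = pmf ?T n"
        using False p m Pm P_mono[of m n] P_Suc_le[of n] by (simp add: pmf_T D_def min_def)
      finally show ?thesis .
    qed
  qed
  have "op (map_pmf (g (Suc m)) ?T) = op (map_pmf (g (Suc m)) (bind_pmf ?T K))" using TK by simp
  also have "\<dots> = op (map_pmf (\<lambda>i. op (map_pmf (g (Suc m)) (K i))) ?T)"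
    by (simp add: map_bind_pmf op_bind)
  also have "(\<lambda>i. op (map_pmf (g (Suc m)) (K i))) = g m"
    by (auto simp: K_def g_def op_return xm)
  finally show ?thesis by simp
qed

lemma tail_indep:
  assumes p: "0 < p" "p \<le> 1" and m: "P m \<le> p" and mm: "m \<le> m'"
  shows "op (map_pmf (g m) (Dist 0 p)) = op (map_pmf (g m') (Dist 0 p))"
  using mm
proof (induction m' rule: dec_induct)
  case (step k)
  have "P k \<le> p" using P_mono[OF step(1)] m by linarith
  with tail_step[OF p this] step show ?case by simp
qed simp


definition N where "N k = (SOME m. P m \<le> (1/2::real)^k)"
lemma N: "P (N k) \<le> (1/2)^k"
  unfolding N_def by (rule someI_ex) (rule P_ex, simp)

definition xs where "xs k = op (map_pmf (g (N k)) (Dist 0 ((1/2)^k)))"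
definition ys where "ys k = op (map_pmf y (Dist ((1/2)^Suc k) ((1/2)^k)))"

lemma xs_0: "xs 0 = x 0"
proof -
  have "xs 0 = op (map_pmf (g 0) (Dist 0 1))"
    unfolding xs_def using tail_indep[of 1 0 "N 0"] by simp
  also have "g 0 = (\<lambda>_. x 0)" by (auto simp: g_def)
  then have "op (map_pmf (g 0) (Dist 0 1)) = x 0" by (simp add: op_return)
  finally show ?thesis .
qed

lemma xs_rec: "xs k = bincomb op (1/2) (ys k) (xs (Suc k))"
proof -
  define m where "m = max (N k) (N (Suc k))"
  define c :: real where "c = (1/2)^Suc k"
  define d :: real where "d = (1/2)^k"
  have cd: "0 < c" "c < d" "d \<le> 1" "d = 2 * c" by (auto simp: c_def d_def power_le_one)
  have Pm: "P m \<le> c" using P_mono[of "N (Suc k)" m] N[of "Suc k"] by (simp add: m_def c_def)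
  have x1: "xs k = op (map_pmf (g m) (Dist 0 d))"
    unfolding xs_def d_def by (rule tail_indep) (use cd N[of k] in \<open>auto simp: m_def d_def\<close>)
  have x2: "xs (Suc k) = op (map_pmf (g m) (Dist 0 c))"
    unfolding xs_def c_def by (rule tail_indep) (use cd N[of "Suc k"] in \<open>auto simp: m_def c_def\<close>)
  have mix: "Dist 0 d = bind_pmf (bernoulli_pmf (1/2)) (\<lambda>b. if b then Dist c d else Dist 0 c)"
  proof (rule pmf_eqI)
    fix n
    have "pmf (bind_pmf (bernoulli_pmf (1/2)) (\<lambda>b. if b then Dist c d else Dist 0 c)) n
        = h c d n * (1/2) + h 0 c n * (1/2)"
      unfolding pmf_bind using cd by (simp add: pmf_Dist)
    also have "\<dots> = h 0 d n" using cd by (simp add: h_def D_0 field_simps)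
    finally show "pmf (Dist 0 d) n = pmf (bind_pmf (bernoulli_pmf (1/2)) (\<lambda>b. if b then Dist c d else Dist 0 c)) n"
      using cd by (simp add: pmf_Dist)
  qed
  have S: "map_pmf (g m) (Dist c d) = map_pmf y (Dist c d)"
  proof (rule map_pmf_cong[OF refl])
    fix i assume "i \<in> set_pmf (Dist c d)"
    then have "h c d i \<noteq> 0" using cd by (simp add: set_pmf_iff pmf_Dist)
    moreover have "m \<le> i \<Longrightarrow> h c d i = 0"
      using P_mono[of m i] Pm cd D_tail[of i c d] by (simp add: h_def)
    ultimately show "g m i = y i" by (auto simp: g_def)
  qed
  have "xs k = op (map_pmf (\<lambda>b. op (map_pmf (g m) (if b then Dist c d else Dist 0 c))) (bernoulli_pmf (1/2)))"
    unfolding x1 by (subst mix) (simp add: map_bind_pmf op_bind)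
  also have "(\<lambda>b. op (map_pmf (g m) (if b then Dist c d else Dist 0 c))) = (\<lambda>b. if b then ys k else xs (Suc k))"
  proof (rule ext)
    fix b
    have ys: "ys k = op (map_pmf y (Dist c d))" by (simp add: ys_def c_def d_def)
    show "op (map_pmf (g m) (if b then Dist c d else Dist 0 c)) = (if b then ys k else xs (Suc k))"
      by (cases b) (simp_all add: x2 S ys)
  qed
  finally show ?thesis by (simp add: bincomb_def)
qed

lemma geo_sums: "(\<lambda>k. (1/2::real) ^ Suc k) sums 1"
proof -
  have "(\<lambda>k. (1/2::real)^k / 2) sums 1"
    using sums_divide[OF geometric_sums[of "1/2::real"], of 2] by simp
  moreover have "(\<lambda>k. (1/2::real)^Suc k) = (\<lambda>k. (1/2)^k / 2)" by (rule ext) simp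
  ultimately show ?thesis by simp
qed

lemma bind_geo:
  "bind_pmf (embed_pmf (\<lambda>k. (1/2::real) ^ Suc k)) (\<lambda>k. Dist ((1/2)^Suc k) ((1/2)^k))
   = embed_pmf (\<lambda>i. lam i * (\<Prod>j<i. mu j))"
proof (rule pmf_eqI)
  fix n
  let ?G = "embed_pmf (\<lambda>k. (1/2::real) ^ Suc k)"
  have wsums: "(\<lambda>i. lam i * (\<Prod>j<i. mu j)) sums 1"
  proof -
    have "(\<lambda>i. P i - P (Suc i)) sums (P 0 - 0)" by (rule telescope_sums'[OF P_lim])
    moreover have "(\<lambda>i. lam i * (\<Prod>j<i. mu j)) = (\<lambda>i. P i - P (Suc i))"
      by (rule ext) (metis lamP P_def)
    ultimately show ?thesis by simp
  qed
  have rhs: "pmf (embed_pmf (\<lambda>i. lam i * (\<Prod>j<i. mu j))) n = P n - P (Suc n)"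
  proof -
    have nn: "0 \<le> lam i * (\<Prod>j<i. mu j)" for i
      using pos[of i] P_pos[of i] unfolding P_def by simp
    have "pmf (embed_pmf (\<lambda>i. lam i * (\<Prod>j<i. mu j))) n = lam n * (\<Prod>j<n. mu j)"
      by (rule embed_pmf_nat[OF nn wsums])
    then show ?thesis by (metis lamP P_def)
  qed
  have G: "pmf ?G k = (1/2)^Suc k" for k using geo_sums by (intro embed_pmf_nat) auto
  have trm: "(1/2::real)^Suc k * pmf (Dist ((1/2)^Suc k) ((1/2)^k)) n
      = D n ((1/2)^k) - D n ((1/2)^Suc k)" for k
    by (subst pmf_Dist) (auto simp: h_def power_le_one field_simps)
  have tl: "(\<lambda>k. D n ((1/2::real)^k)) \<longlonglongrightarrow> D n 0"
    unfolding D_def by (intro tendsto_intros LIMSEQ_realpow_zero) simp_all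
  have ts: "(\<lambda>k. D n ((1/2::real)^k) - D n ((1/2)^Suc k)) sums (P n - P (Suc n))"
    using telescope_sums'[OF tl] by (simp add: D_0 D_1)
  have nn: "0 \<le> D n ((1/2::real)^k) - D n ((1/2)^Suc k)" for k
    using D_mono[of "(1/2::real)^Suc k" "(1/2)^k" n] by (simp add: power_Suc)
  have "ennreal (pmf (bind_pmf ?G (\<lambda>k. Dist ((1/2)^Suc k) ((1/2)^k))) n)
      = (\<integral>\<^sup>+k. ennreal (pmf ?G k) * ennreal (pmf (Dist ((1/2)^Suc k) ((1/2)^k)) n) \<partial>count_space UNIV)"
    by (simp add: ennreal_pmf_bind nn_integral_measure_pmf)
  also have "\<dots> = (\<integral>\<^sup>+k. ennreal (D n ((1/2::real)^k) - D n ((1/2)^Suc k)) \<partial>count_space UNIV)"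
  proof (intro nn_integral_cong)
    fix k
    have "ennreal (pmf ?G k) * ennreal (pmf (Dist ((1/2)^Suc k) ((1/2)^k)) n)
        = ennreal (pmf ?G k * pmf (Dist ((1/2)^Suc k) ((1/2)^k)) n)"
      by (rule ennreal_mult[symmetric]) simp_all
    also have "pmf ?G k * pmf (Dist ((1/2)^Suc k) ((1/2)^k)) n = D n ((1/2::real)^k) - D n ((1/2)^Suc k)"
      by (simp only: G trm)
    finally show "ennreal (pmf ?G k) * ennreal (pmf (Dist ((1/2)^Suc k) ((1/2)^k)) n)
        = ennreal (D n ((1/2::real)^k) - D n ((1/2)^Suc k))" .
  qed
  also have "\<dots> = ennreal (P n - P (Suc n))"
    using ts nn by (simp add: nn_integral_count_space_nat suminf_ennreal2 sums_iff)
  finally show "pmf (bind_pmf ?G (\<lambda>k. Dist ((1/2)^Suc k) ((1/2)^k))) n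
      = pmf (embed_pmf (\<lambda>i. lam i * (\<Prod>j<i. mu j))) n"
    unfolding rhs using P_Suc_le[of n] by simp
qed

lemma final:
  assumes H: "\<forall>(x :: nat \<Rightarrow> 'x) (y :: nat \<Rightarrow> 'x).
       (\<forall>i. x i = bincomb op (1/2) (y i) (x (Suc i)))
       \<longrightarrow> x 0 = natcomb op (\<lambda>i. (1/2) ^ (Suc i)) y"
  shows "x 0 = natcomb op (\<lambda>i. lam i * (\<Prod>j<i. mu j)) y"
proof -
  have "xs 0 = natcomb op (\<lambda>i. (1/2) ^ (Suc i)) ys" using H xs_rec by blast
  also have "\<dots> = op (map_pmf y (bind_pmf (embed_pmf (\<lambda>k. (1/2::real) ^ Suc k)) (\<lambda>k. Dist ((1/2)^Suc k) ((1/2)^k))))"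
    unfolding natcomb_def ys_def map_bind_pmf op_bind ..
  finally show ?thesis unfolding bind_geo xs_0 natcomb_def .
qed

end

theorem mainTheorem7:
  fixes op :: "'x pmf \<Rightarrow> 'x"
  assumes "superconvex op"
  shows "iterative op \<longleftrightarrow>
    (\<forall>(x :: nat \<Rightarrow> 'x) (y :: nat \<Rightarrow> 'x).
       (\<forall>i. x i = bincomb op (1/2) (y i) (x (Suc i)))
       \<longrightarrow> x 0 = natcomb op (\<lambda>i. (1/2) ^ (Suc i)) y)"
proof
  assume it: "iterative op"
  show "\<forall>(x :: nat \<Rightarrow> 'x) (y :: nat \<Rightarrow> 'x).
       (\<forall>i. x i = bincomb op (1/2) (y i) (x (Suc i)))
       \<longrightarrow> x 0 = natcomb op (\<lambda>i. (1/2) ^ (Suc i)) y"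
  proof (intro allI impI)
    fix x y :: "nat \<Rightarrow> 'x"
    assume r: "\<forall>i. x i = bincomb op (1/2) (y i) (x (Suc i))"
    have l: "(\<lambda>n. \<Prod>i<n. (1/2::real)) \<longlonglongrightarrow> 0"
      by (simp add: LIMSEQ_realpow_zero)
    have "x 0 = natcomb op (\<lambda>i. (1/2) * (\<Prod>j<i. (1/2::real))) y"
    proof -
      have "(\<forall>i. 0 < (1/2::real) \<and> (1/2::real) < 1 \<and> 0 < (1/2::real) \<and> (1/2::real) < 1 \<and> (1/2::real) + 1/2 = 1) \<and>
        (\<forall>i. x i = bincomb op (1/2) (y i) (x (Suc i))) \<and> (\<lambda>n. \<Prod>i<n. (1/2::real)) \<longlonglongrightarrow> 0"
      proof -
        have c1: "\<forall>i::nat. 0 < (1/2::real) \<and> (1/2::real) < 1 \<and> 0 < (1/2::real) \<and> (1/2::real) < 1 \<and> (1/2::real) + 1/2 = 1"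
          by simp
        show ?thesis using c1 r l by blast
      qed
      then show ?thesis
        using spec[OF spec[OF spec[OF spec[OF it[unfolded iterative_def], of "\<lambda>_. 1/2"], of "\<lambda>_. 1/2"], of x], of y]
        by (rule mp[rotated])
    qed
    also have "(\<lambda>i. (1/2) * (\<Prod>j<i. (1/2::real))) = (\<lambda>i. (1/2) ^ (Suc i))"
      by (rule ext) simp
    finally show "x 0 = natcomb op (\<lambda>i. (1/2) ^ (Suc i)) y" .
  qed
next
  assume H: "\<forall>(x :: nat \<Rightarrow> 'x) (y :: nat \<Rightarrow> 'x).
       (\<forall>i. x i = bincomb op (1/2) (y i) (x (Suc i)))
       \<longrightarrow> x 0 = natcomb op (\<lambda>i. (1/2) ^ (Suc i)) y"
  show "iterative op"
    unfolding iterative_def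
  proof (intro allI impI, elim conjE)
    fix lam mu :: "nat \<Rightarrow> real" and x y :: "nat \<Rightarrow> 'x"
    assume a: "\<forall>i. 0 < lam i \<and> lam i < 1 \<and> 0 < mu i \<and> mu i < 1 \<and> lam i + mu i = 1"
      and b: "\<forall>i. x i = bincomb op (lam i) (y i) (x (Suc i))"
      and c: "(\<lambda>n. \<Prod>i<n. mu i) \<longlonglongrightarrow> 0"
    interpret IT op lam mu x y
    proof unfold_locales
      show "superconvex op" by (rule assms)
      show "0 < lam i \<and> lam i < 1 \<and> 0 < mu i \<and> mu i < 1 \<and> lam i + mu i = 1" for i using a by blast
      show "x i = bincomb op (lam i) (y i) (x (Suc i))" for i using b by blast
      show "(\<lambda>n. \<Prod>i<n. mu i) \<longlonglongrightarrow> 0" by (rule c)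
    qed
    show "x 0 = natcomb op (\<lambda>i. lam i * (\<Prod>j<i. mu j)) y"
      by (rule final[OF H])
  qed
qed

end
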